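(* Let $a,b,c>0$ be constants. For given constants $y_0>0$ and $z_0>0$ consider the free boundary problem of finding $\hat{x}>0$ and a function $y$ on $[0,\hat x]$ with \[ b y' - a y'' - c = 0 \ \ (0<x<\hat{x}),\qquad y(\hat{x})=0,\qquad y(0)=-y_0,\qquad y'(\hat{x})=z_0 . \] Then there exists a unique such pair $(y,\hat{x})$ with $\hat x>0$. Moreover, $\hat{x}=\hat{x}(y_0,z_0)$ is strictly increasing in $y_0$ and strictly decreasing in $z_0$, and there is $\hat{x}_c(y_0)>0$ such that \[ \lim_{y_0\to\infty}\hat{x}(y_0,z_0)=\infty,\quad \lim_{y_0\downarrow 0}\hat{x}(y_0,z_0)=0\quad\text{for every } z_0>0, \] \[ \lim_{z_0\to\infty}\hat{x}(y_0,z_0)=0,\quad \lim_{z_0\downarrow 0}\hat{x}(y_0,z_0)=\hat{x}_c(y_0)\quad\text{for every } y_0>0 . \] The function $\hat{x}_c$ is strictly increasing with $\lim_{y_0\to 0}\hat{x}_c(y_0)=0$ and $\lim_{y_0\to\infty}\hat{x}_c(y_0)=\infty$. All dependences on $y_0$ and $z_0$ are analytic. *)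

theory Defs
  imports "HOL-Analysis.Analysis"
begin

definition fbp_solution ::
  "real \<Rightarrow> real \<Rightarrow> real \<Rightarrow> real \<Rightarrow> real \<Rightarrow> (real \<Rightarrow> real) \<Rightarrow> real \<Rightarrow> bool" where
  "fbp_solution a b c y0 z0 y xh \<longleftrightarrow>
     xh > 0 \<and>
     (\<exists>y' y''.
        (\<forall>x\<in>{0..xh}. (y has_real_derivative y' x) (at x within {0..xh})) \<and>
        (\<forall>x\<in>{0<..<xh}. (y' has_real_derivative y'' x) (at x)) \<and>
        (\<forall>x\<in>{0<..<xh}. b * y' x - a * y'' x - c = 0) \<and>
        y xh = 0 \<and> y 0 = - y0 \<and> y' xh = z0)"

definition xhat :: "real \<Rightarrow> real \<Rightarrow> real \<Rightarrow> real \<Rightarrow> real \<Rightarrow> real" where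
  "xhat a b c y0 z0 = (THE xh. \<exists>y. fbp_solution a b c y0 z0 y xh)"

definition real_analytic_on :: "(real \<Rightarrow> real) \<Rightarrow> real set \<Rightarrow> bool" where
  "real_analytic_on f S \<longleftrightarrow>
     (\<forall>x\<in>S. \<exists>r>0. \<exists>coef :: nat \<Rightarrow> real.
        \<forall>h. \<bar>h\<bar> < r \<longrightarrow> ((\<lambda>n. coef n * h ^ n) has_sum f (x + h)) UNIV)"

text \<open>Joint real analyticity in two variables on a set S (local convergent double power
  series; unconditional summation over nat \<times> nat, i.e. absolute convergence for reals).\<close>
definition real_analytic2_on :: "(real \<Rightarrow> real \<Rightarrow> real) \<Rightarrow> (real \<times> real) set \<Rightarrow> bool" where
  "real_analytic2_on f S \<longleftrightarrow>
     (\<forall>(x, y)\<in>S. \<exists>r>0. \<exists>coef :: nat \<Rightarrow> nat \<Rightarrow> real.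
        \<forall>h k. \<bar>h\<bar> < r \<and> \<bar>k\<bar> < r \<longrightarrow>
          ((\<lambda>(m, n). coef m n * h ^ m * k ^ n) has_sum f (x + h) (y + k)) UNIV)"

end

theory Submission
  imports Defs "HOL-Complex_Analysis.Complex_Analysis"
begin

lemma diag_bij: "bij_betw (\<lambda>(N,i). (i, N - i)) (SIGMA N:(UNIV::nat set). {..N}) (UNIV :: (nat \<times> nat) set)"
proof (rule bij_betwI[where g = "\<lambda>(i,j). (i+j, i)"])
  show "(\<lambda>(N::nat, i). (i, N - i)) \<in> (SIGMA N:UNIV. {..N}) \<rightarrow> UNIV" by auto
  show "(\<lambda>(i::nat, j). (i + j, i)) \<in> UNIV \<rightarrow> (SIGMA N:UNIV. {..N})" by auto
qed (auto simp: le_add1)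

lemma diag_has_sum:
  fixes g :: "nat \<times> nat \<Rightarrow> 'a::banach"
  assumes "(g has_sum S) UNIV"
  shows "(\<lambda>N. \<Sum>i\<le>N. g (i, N - i)) sums S"
proof -
  have "((\<lambda>p. g ((\<lambda>(N,i). (i, N - i)) p)) has_sum S) (SIGMA N:UNIV. {..N})"
    using has_sum_reindex_bij_betw[OF diag_bij] assms by blast
  then have "((\<lambda>N. \<Sum>i\<le>N. g (i, N - i)) has_sum S) UNIV"
    by (rule has_sum_SigmaD) auto
  then show ?thesis by (rule has_sum_imp_sums)
qed

lemma binom_double_summable:
  fixes a b :: real
  assumes "0 \<le> a" "0 \<le> b" "a + b < 1"
  shows "(\<lambda>(i,j). real ((i+j) choose i) * a^i * b^j) summable_on UNIV"
proof -
  let ?f = "\<lambda>(i,j). real ((i+j) choose i) * a^i * b^j"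
  have inner: "((\<lambda>i. ?f ((\<lambda>(N,i). (i, N - i)) (N,i))) has_sum (a+b)^N) {..N}" for N
  proof -
    have "(a+b)^N = (\<Sum>i\<le>N. real (N choose i) * a^i * b^(N-i))"
      by (simp add: binomial_ring)
    also have "\<dots> = (\<Sum>i\<le>N. ?f ((\<lambda>(N,i). (i, N - i)) (N,i)))"
      by (intro sum.cong) auto
    finally show ?thesis by (simp add: has_sum_finiteI)
  qed
  have geo: "(\<lambda>N. (a+b)^N) summable_on UNIV"
  proof -
    have "summable (\<lambda>N. norm ((a+b)^N))"
      using assms unfolding norm_power by (intro summable_geometric) auto
    moreover have "(\<lambda>N. (a+b)^N) sums (1 / (1 - (a+b)))"
      using assms by (intro geometric_sums) auto
    ultimately show ?thesis using norm_summable_imp_has_sum summable_on_def by blast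
  qed
  have "(\<lambda>p. ?f ((\<lambda>(N,i). (i, N - i)) p)) summable_on (SIGMA N:UNIV. {..N})"
    using inner geo
    by (intro summable_on_SigmaI[where g = "\<lambda>N. (a+b)^N"]) (auto intro!: mult_nonneg_nonneg simp: assms)
  then show ?thesis
    using diag_bij summable_on_reindex_bij_betw by blast
qed

lemma series_lemma:
  fixes f A Q :: "complex \<Rightarrow> complex" and h k z :: complex
  assumes r: "0 < r" and cf: "continuous_on (sphere z r) f"
    and cA: "continuous_on (sphere z r) A" and cQ: "continuous_on (sphere z r) Q"
    and Am: "\<And>w. w \<in> sphere z r \<Longrightarrow> m \<le> norm (A w)" and m: "0 < m"
    and QM: "\<And>w. w \<in> sphere z r \<Longrightarrow> norm (Q w) \<le> M"
    and hk: "norm h + M * norm k < m"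
  shows "((\<lambda>(i,j). (of_nat ((i+j) choose i) * contour_integral (circlepath z r)
              (\<lambda>w. f w * (- Q w)^j / A w ^ (i+j+1))) * h^i * k^j)
          has_sum contour_integral (circlepath z r) (\<lambda>w. f w / (A w + k * Q w - h))) UNIV"
proof -
  define s where "s = norm h + M * norm k"
  define q where "q = s / m"
  have zr: "z + of_real r \<in> sphere z r" using r by (simp add: dist_norm)
  have M0: "0 \<le> M" using QM[OF zr] norm_ge_zero order_trans by blast
  have s0: "0 \<le> s" using M0 by (simp add: s_def)
  have q0: "0 \<le> q" and q1: "q < 1" using s0 m hk by (auto simp: q_def s_def)
  have "bounded (f ` sphere z r)"
    by (intro compact_imp_bounded compact_continuous_image cf compact_sphere)
  then obtain B where B: "B > 0" "\<And>w. w \<in> sphere z r \<Longrightarrow> norm (f w) \<le> B"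
    unfolding bounded_pos by auto
  have Anz: "A w \<noteq> 0" if "w \<in> sphere z r" for w using Am[OF that] m by auto
  define T where "T = (\<lambda>N w. f w * (h - k * Q w)^N / A w ^ (N+1))"
  have dle: "norm (h - k * Q w) \<le> s" if "w \<in> sphere z r" for w
  proof -
    have "norm (h - k * Q w) \<le> norm h + norm k * norm (Q w)"
      by (metis norm_mult norm_triangle_ineq4)
    also have "\<dots> \<le> norm h + norm k * M"
      using QM[OF that] by (intro add_left_mono mult_left_mono) auto
    finally show ?thesis by (simp add: s_def mult.commute)
  qed
  have Tb: "norm (T N w) \<le> (B / m) * q ^ N" if "w \<in> sphere z r" for N w
  proof -
    have "norm (T N w) = norm (f w) * norm (h - k * Q w) ^ N / norm (A w) ^ (N+1)"
      by (simp add: T_def norm_mult norm_divide norm_power)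
    also have "\<dots> \<le> B * s ^ N / m ^ (N+1)"
      using B dle[OF that] Am[OF that] m s0 that
      by (intro frac_le mult_mono power_mono) auto
    also have "\<dots> = (B / m) * q ^ N" by (simp add: q_def power_divide)
    finally show ?thesis .
  qed
  have Tsum: "(\<lambda>N. T N w) sums (f w / (A w + k * Q w - h))" if "w \<in> sphere z r" for w
  proof -
    have nr: "norm ((h - k * Q w) / A w) < 1"
    proof -
      have "norm ((h - k * Q w) / A w) = norm (h - k * Q w) / norm (A w)" by (simp add: norm_divide)
      also have "\<dots> \<le> s / m" using dle[OF that] Am[OF that] m s0 by (intro frac_le) auto
      also have "\<dots> < 1" using q1 by (simp add: q_def)
      finally show ?thesis .
    qed
    have "(\<lambda>N. (f w / A w) * ((h - k * Q w) / A w) ^ N) sums ((f w / A w) * (1 / (1 - (h - k * Q w) / A w)))"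
      by (intro sums_mult geometric_sums nr)
    moreover have "(\<lambda>N. (f w / A w) * ((h - k * Q w) / A w) ^ N) = (\<lambda>N. T N w)"
      by (auto simp: T_def power_divide field_simps)
    moreover have "(f w / A w) * (1 / (1 - (h - k * Q w) / A w)) = f w / (A w + k * Q w - h)"
      using Anz[OF that] by (simp add: field_simps)
    ultimately show ?thesis by metis
  qed
  have ul0: "uniform_limit (sphere z r) (\<lambda>n w. \<Sum>N<n. T N w) (\<lambda>w. suminf (\<lambda>N. T N w)) sequentially"
    by (rule Weierstrass_m_test[where M = "\<lambda>N. (B / m) * q ^ N"])
       (use Tb q0 q1 in \<open>auto intro!: summable_mult summable_geometric\<close>)
  have ul: "uniform_limit (sphere z r) (\<lambda>n w. \<Sum>N<n. T N w) (\<lambda>w. f w / (A w + k * Q w - h)) sequentially"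
    using ul0 by (rule uniform_limit_cong'[THEN iffD1, rotated -1]) (simp_all add: sums_unique[OF Tsum, symmetric])
  have Tint: "T N contour_integrable_on (circlepath z r)" for N
    unfolding T_def using r
    by (intro contour_integrable_continuous_circlepath)
       (auto intro!: continuous_intros cf cA cQ simp: Anz)
  have lim: "((\<lambda>n. contour_integral (circlepath z r) (\<lambda>w. \<Sum>N<n. T N w)) \<longlongrightarrow>
              contour_integral (circlepath z r) (\<lambda>w. f w / (A w + k * Q w - h))) sequentially"
    by (rule contour_integral_uniform_limit_circlepath[OF _ ul _ r])
       (auto intro!: contour_integrable_sum Tint always_eventually)
  have sums1: "(\<lambda>N. contour_integral (circlepath z r) (T N)) sums
              contour_integral (circlepath z r) (\<lambda>w. f w / (A w + k * Q w - h))"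
    unfolding sums_def using lim by (simp add: contour_integral_sum Tint)
  define I where "I = (\<lambda>i j. contour_integral (circlepath z r) (\<lambda>w. f w * (- Q w)^j / A w ^ (i+j+1)))"
  define g where "g = (\<lambda>(i,j). (of_nat ((i+j) choose i) * I i j) * h^i * k^j)"
  have Iint: "(\<lambda>w. f w * (- Q w)^j / A w ^ n) contour_integrable_on (circlepath z r)" for n j
    using r by (intro contour_integrable_continuous_circlepath)
       (auto intro!: continuous_intros cf cA cQ simp: Anz)
  have TN: "contour_integral (circlepath z r) (T N) = (\<Sum>i\<le>N. g (i, N - i))" for N
  proof -
    have "T N = (\<lambda>w. \<Sum>i\<le>N. (of_nat (N choose i) * h^i * k^(N-i)) * (f w * (- Q w)^(N-i) / A w ^ (N+1)))"
    proof
      fix w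
      have "(h - k * Q w)^N = (h + k * (- Q w))^N" by simp
      also have "\<dots> = (\<Sum>i\<le>N. of_nat (N choose i) * h^i * (k^(N-i) * (- Q w)^(N-i)))"
        by (simp only: binomial_ring power_mult_distrib)
      finally show "T N w = (\<Sum>i\<le>N. (of_nat (N choose i) * h^i * k^(N-i)) * (f w * (- Q w)^(N-i) / A w ^ (N+1)))"
        by (simp add: T_def sum_distrib_left sum_divide_distrib del: power_minus_odd power_minus_even) (simp add: algebra_simps)
    qed
    then have "contour_integral (circlepath z r) (T N) =
       (\<Sum>i\<le>N. contour_integral (circlepath z r) (\<lambda>w. (of_nat (N choose i) * h^i * k^(N-i)) * (f w * (- Q w)^(N-i) / A w ^ (N+1))))"
      by (simp only:) (rule contour_integral_sum[OF finite_atMost contour_integrable_lmul[OF Iint]])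
    also have "\<dots> = (\<Sum>i\<le>N. (of_nat (N choose i) * h^i * k^(N-i)) * contour_integral (circlepath z r) (\<lambda>w. f w * (- Q w)^(N-i) / A w ^ (N+1)))"
      by (intro sum.cong refl contour_integral_lmul Iint)
    also have "\<dots> = (\<Sum>i\<le>N. g (i, N - i))"
      by (intro sum.cong) (auto simp: g_def I_def)
    finally show ?thesis .
  qed
  have gsum: "g summable_on UNIV"
  proof (rule abs_summable_summable)
    let ?a = "norm h / m" and ?b = "M * norm k / m"
    have ab: "?a + ?b < 1" using hk m by (simp add: add_divide_distrib[symmetric])
    have bs: "(\<lambda>(i,j). real ((i+j) choose i) * ?a^i * ?b^j) summable_on UNIV"
      by (rule binom_double_summable) (use m M0 ab in auto)
    have Ib: "norm (I i j) \<le> B * M^j / m^(i+j+1) * (2*pi*r)" for i j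
      unfolding I_def
    proof (rule has_contour_integral_bound_circlepath[OF has_contour_integral_integral[OF Iint]])
      show "0 \<le> B * M ^ j / m ^ (i + j + 1)" using B M0 m by auto
      show "0 < r" by (rule r)
      fix x assume "norm (x - z) = r"
      then have x: "x \<in> sphere z r" by (simp add: dist_norm norm_minus_commute)
      have "norm (f x * (- Q x) ^ j / A x ^ (i + j + 1)) = norm (f x) * norm (Q x)^j / norm (A x)^(i+j+1)"
        by (simp add: norm_mult norm_divide norm_power)
      also have "\<dots> \<le> B * M ^ j / m ^ (i + j + 1)"
        using B x QM[OF x] Am[OF x] m M0
        by (intro frac_le mult_mono power_mono) auto
      finally show "norm (f x * (- Q x) ^ j / A x ^ (i + j + 1)) \<le> B * M ^ j / m ^ (i + j + 1)" .
    qed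
    have "(\<lambda>p. (B * (2*pi*r) / m) * (case p of (i,j) \<Rightarrow> real ((i+j) choose i) * ?a^i * ?b^j)) summable_on UNIV"
      by (rule summable_on_cmult_right[OF bs])
    then show "(\<lambda>p. norm (g p)) summable_on UNIV"
    proof (rule summable_on_comparison_test)
      fix p :: "nat \<times> nat"
      obtain i j where p: "p = (i,j)" by fastforce
      have "norm (g p) = real ((i+j) choose i) * norm (I i j) * norm h ^ i * norm k ^ j"
        by (simp add: p g_def norm_mult norm_power)
      also have "\<dots> \<le> real ((i+j) choose i) * (B * M^j / m^(i+j+1) * (2*pi*r)) * norm h ^ i * norm k ^ j"
        by (intro mult_right_mono mult_left_mono Ib) auto
      also have "\<dots> = (B * (2*pi*r) / m) * (real ((i+j) choose i) * ?a^i * ?b^j)"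
        using m by (simp add: power_divide power_mult_distrib power_add field_simps)
      finally show "norm (g p) \<le> (B * (2*pi*r) / m) * (case p of (i,j) \<Rightarrow> real ((i+j) choose i) * ?a^i * ?b^j)"
        by (simp add: p)
    qed auto
  qed
  have "(\<lambda>N. \<Sum>i\<le>N. g (i, N - i)) sums infsum g UNIV"
    by (rule diag_has_sum[OF has_sum_infsum[OF gsum]])
  moreover have "(\<lambda>N. \<Sum>i\<le>N. g (i, N - i)) sums contour_integral (circlepath z r) (\<lambda>w. f w / (A w + k * Q w - h))"
    using sums1 by (simp add: TN)
  ultimately have "infsum g UNIV = contour_integral (circlepath z r) (\<lambda>w. f w / (A w + k * Q w - h))"
    by (rule sums_unique2)
  then show ?thesis using has_sum_infsum[OF gsum] by (simp add: g_def I_def)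
qed

lemma inj_from_deriv:
  fixes F F' :: "complex \<Rightarrow> complex"
  assumes S: "convex S" and dF: "\<And>w. w \<in> S \<Longrightarrow> (F has_field_derivative F' w) (at w)"
    and b: "\<And>w. w \<in> S \<Longrightarrow> norm (F' w - D) \<le> norm D / 2" and D: "D \<noteq> 0"
  shows "inj_on F S"
proof (rule inj_onI)
  fix x y assume x: "x \<in> S" and y: "y \<in> S" and e: "F x = F y"
  have "norm ((F x - D * x) - (F y - D * y)) \<le> norm D / 2 * norm (x - y)"
  proof (rule field_differentiable_bound[OF S _ b x y])
    fix w assume w: "w \<in> S"
    show "((\<lambda>w. F w - D * w) has_field_derivative F' w - D) (at w within S)"
    proof -
      have "(F has_field_derivative F' w) (at w within S)"
        using dF[OF w] by (rule has_field_derivative_at_within)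
      then show ?thesis by (auto intro!: derivative_eq_intros)
    qed
  qed
  also have "(F x - D * x) - (F y - D * y) = D * (y - x)" using e by (simp add: algebra_simps)
  finally have "norm D * norm (x - y) \<le> norm D / 2 * norm (x - y)"
    by (simp add: norm_mult norm_minus_commute)
  moreover have "norm D * norm (x - y) = 2 * (norm D / 2 * norm (x - y))" by simp
  ultimately have "norm D / 2 * norm (x - y) \<le> 0" by linarith
  then have "norm (x - y) \<le> 0" using D by (simp add: mult_le_0_iff)
  then show "x = y" by simp
qed

lemma Re_mult_ofreal: "Re (z * of_real t) = Re z * t"
  by simp

lemma implicit_analytic:
  fixes A A' Q Q' :: "complex \<Rightarrow> complex" and x0 :: real
  assumes dA: "\<And>w. (A has_field_derivative A' w) (at w)"
      and dQ: "\<And>w. (Q has_field_derivative Q' w) (at w)"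
      and hA': "A' holomorphic_on UNIV" and hQ': "Q' holomorphic_on UNIV"
      and A0: "A (of_real x0) = 0" and D: "A' (of_real x0) \<noteq> 0"
  shows "\<exists>r>0. \<exists>coef::nat\<Rightarrow>nat\<Rightarrow>real. \<forall>h k x. \<bar>h\<bar> < r \<and> \<bar>k\<bar> < r \<and> \<bar>x - x0\<bar> < r \<and>
            A (of_real x) + of_real k * Q (of_real x) = of_real h \<longrightarrow>
            ((\<lambda>(m,n). coef m n * h^m * k^n) has_sum x) UNIV"
proof -
  define z0 :: complex where "z0 = of_real x0"
  define D where "D = A' z0"
  have Dnz: "D \<noteq> 0" using D by (simp add: D_def z0_def)
  have hA: "A holomorphic_on UNIV" and hQ: "Q holomorphic_on UNIV"
    using dA dQ by (auto simp: holomorphic_on_def field_differentiable_def intro: has_field_derivative_at_within)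
  have cA': "continuous_on UNIV A'" and cQ': "continuous_on UNIV Q'"
    and cA: "continuous_on UNIV A" and cQ: "continuous_on UNIV Q"
    using hA' hQ' hA hQ holomorphic_on_imp_continuous_on by blast+
  obtain \<delta> where \<delta>: "\<delta> > 0" "\<And>w. dist w z0 < \<delta> \<Longrightarrow> dist (A' w) (A' z0) < norm D / 4"
    using cA' Dnz unfolding continuous_on_iff by (metis UNIV_I zero_less_norm_iff divide_pos_pos zero_less_numeral)
  define \<rho> where "\<rho> = \<delta> / 2"
  have \<rho>: "\<rho> > 0" using \<delta> by (simp add: \<rho>_def)
  have A'b: "norm (A' w - D) \<le> norm D / 4" if "w \<in> cball z0 \<rho>" for w
    using \<delta>(2)[of w] that \<rho> by (simp add: \<rho>_def D_def dist_norm norm_minus_commute)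
  have "bounded (Q' ` cball z0 \<rho>)"
    by (intro compact_imp_bounded compact_continuous_image continuous_on_subset[OF cQ']) auto
  then obtain M1 where M1: "M1 > 0" "\<And>w. w \<in> cball z0 \<rho> \<Longrightarrow> norm (Q' w) \<le> M1"
    unfolding bounded_pos by auto
  define kb where "kb = norm D / (4 * M1)"
  have kb: "kb > 0" using M1 Dnz by (simp add: kb_def)
  have Phi'b: "norm (A' w + K * Q' w - D) \<le> norm D / 2" if "w \<in> cball z0 \<rho>" "norm K \<le> kb" for w K
  proof -
    have "norm (K * Q' w) \<le> kb * M1" using that M1 kb by (simp add: norm_mult mult_mono)
    also have "\<dots> = norm D / 4" using M1 by (simp add: kb_def)
    finally have "norm (K * Q' w) \<le> norm D / 4" .
    moreover have "norm (A' w + K * Q' w - D) \<le> norm (A' w - D) + norm (K * Q' w)"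
      by (metis add_diff_eq diff_add_eq norm_triangle_ineq)
    ultimately show ?thesis using A'b[OF that(1)] by simp
  qed
  have dPhi: "((\<lambda>w. A w + K * Q w - H) has_field_derivative A' w + K * Q' w) (at w)" for K H w
    using dA[of w] dQ[of w] by (auto intro!: derivative_eq_intros)
  have injPhi: "inj_on (\<lambda>w. A w + K * Q w - H) (cball z0 \<rho>)" if "norm K \<le> kb" for K H
    by (rule inj_from_deriv[OF convex_cball dPhi Phi'b[OF _ that] Dnz])
  define rc where "rc = \<rho> / 2"
  have rc: "rc > 0" "rc < \<rho>" using \<rho> by (auto simp: rc_def)
  have sph_sub: "sphere z0 rc \<subseteq> ball z0 \<rho>" using rc by auto
  have Anz: "A w \<noteq> 0" if "w \<in> sphere z0 rc" for w
  proof
    assume Aw: "A w = 0"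
    have inj0: "inj_on A (cball z0 \<rho>)" using injPhi[of 0 0] kb by simp
    have "w \<in> cball z0 \<rho>" "z0 \<in> cball z0 \<rho>" using that sph_sub \<rho> by auto
    then have "w = z0" using inj0 Aw A0 unfolding inj_on_def z0_def by metis
    then show False using that rc by simp
  qed
  have spne: "sphere z0 rc \<noteq> {}" using rc by (simp add: sphere_empty less_le)
  have "continuous_on (sphere z0 rc) (\<lambda>w. norm (A w))"
    by (intro continuous_intros continuous_on_subset[OF cA]) auto
  then obtain wm where wm: "wm \<in> sphere z0 rc" "\<And>w. w \<in> sphere z0 rc \<Longrightarrow> norm (A wm) \<le> norm (A w)"
    using continuous_attains_inf[OF compact_sphere spne, of "\<lambda>w. norm (A w)"] by blast
  define m where "m = norm (A wm)"
  have m: "m > 0" using Anz[OF wm(1)] by (simp add: m_def)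
  have Am: "m \<le> norm (A w)" if "w \<in> sphere z0 rc" for w using wm(2)[OF that] by (simp add: m_def)
  have "bounded (Q ` sphere z0 rc)"
    by (intro compact_imp_bounded compact_continuous_image continuous_on_subset[OF cQ]) auto
  then obtain M where M: "M > 0" "\<And>w. w \<in> sphere z0 rc \<Longrightarrow> norm (Q w) \<le> M"
    unfolding bounded_pos by auto
  define R where "R = min rc (min kb (m / (2 * (1 + M))))"
  have R: "R > 0" using rc kb m M by (simp add: R_def)
  define f1 where "f1 = (\<lambda>w. w * A' w)"
  define f2 where "f2 = (\<lambda>w. w * Q' w)"
  have cf1: "continuous_on (sphere z0 rc) f1" and cf2: "continuous_on (sphere z0 rc) f2"
    unfolding f1_def f2_def
    by (auto intro!: continuous_intros continuous_on_subset[OF cA'] continuous_on_subset[OF cQ'])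
  define c1 where "c1 = (\<lambda>i j. of_nat ((i+j) choose i) * contour_integral (circlepath z0 rc)
              (\<lambda>w. f1 w * (- Q w)^j / A w ^ (i+j+1)))"
  define c2 where "c2 = (\<lambda>i j. of_nat ((i+j) choose i) * contour_integral (circlepath z0 rc)
              (\<lambda>w. f2 w * (- Q w)^j / A w ^ (i+j+1)))"
  define coef where "coef = (\<lambda>i j. Re ((c1 i j + (if j = 0 then 0 else c2 i (j - 1))) / (2 * of_real pi * \<i>)))"
  show ?thesis
  proof (intro exI[of _ R] conjI R exI[of _ coef] allI impI)
    fix h k x :: real
    assume hkx: "\<bar>h\<bar> < R \<and> \<bar>k\<bar> < R \<and> \<bar>x - x0\<bar> < R \<and> A (of_real x) + of_real k * Q (of_real x) = of_real h"
    define H :: complex where "H = of_real h"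
    define K :: complex where "K = of_real k"
    define X :: complex where "X = of_real x"
    define Phi where "Phi = (\<lambda>w. A w + K * Q w - H)"
    define Phi' where "Phi' = (\<lambda>w. A' w + K * Q' w)"
    have K: "norm K \<le> kb" using hkx by (simp add: K_def R_def)
    have PX: "Phi X = 0" using hkx by (simp add: Phi_def H_def K_def X_def)
    have Xb: "X \<in> ball z0 rc" using hkx
      by (simp add: X_def z0_def dist_norm R_def abs_minus_commute flip: of_real_diff)
    have Xc: "X \<in> cball z0 \<rho>" using Xb rc by auto
    have injP: "inj_on Phi (cball z0 \<rho>)" unfolding Phi_def by (rule injPhi[OF K])
    have dP: "(Phi has_field_derivative Phi' w) (at w)" for w
      unfolding Phi_def Phi'_def by (rule dPhi)
    have hP: "Phi holomorphic_on UNIV"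
      using dP by (auto simp: holomorphic_on_def field_differentiable_def intro: has_field_derivative_at_within)
    have hP': "Phi' holomorphic_on UNIV" unfolding Phi'_def
      by (intro holomorphic_intros hA' hQ')
    have P'nz: "Phi' w \<noteq> 0" if "w \<in> cball z0 \<rho>" for w
    proof
      assume "Phi' w = 0"
      then show False using Phi'b[OF that K] Dnz by (simp add: Phi'_def)
    qed
    have Pnz: "Phi w \<noteq> 0" if "w \<in> sphere z0 rc" for w
    proof
      assume "Phi w = 0"
      then have "Phi w = Phi X" using PX by simp
      moreover have "w \<in> cball z0 \<rho>" using that sph_sub by auto
      ultimately have "w = X" using injP Xc by (metis inj_onD)
      then show False using that Xb by simp
    qed
    define Rf where "Rf = (\<lambda>w. if w = X then deriv Phi X else (Phi w - Phi X) / (w - X))"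
    have hR: "Rf holomorphic_on ball z0 \<rho>"
      unfolding Rf_def
      by (rule pole_lemma[OF holomorphic_on_subset[OF hP]]) (use Xb rc in auto)
    have derivX: "deriv Phi X = Phi' X" using dP by (rule DERIV_imp_deriv)
    have Rnz: "Rf w \<noteq> 0" if "w \<in> ball z0 \<rho>" for w
    proof (cases "w = X")
      case True then show ?thesis using P'nz[OF Xc] by (simp add: Rf_def derivX)
    next
      case False
      moreover have "w \<in> cball z0 \<rho>" using that by auto
      ultimately have "Phi w \<noteq> Phi X" using injP Xc by (metis inj_onD)
      then show ?thesis using False by (simp add: Rf_def)
    qed
    define G where "G = (\<lambda>w. w * Phi' w / Rf w)"
    have hG: "G holomorphic_on ball z0 \<rho>" unfolding G_def
      by (intro holomorphic_intros holomorphic_on_subset[OF hP'] hR Rnz) auto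
    have cG: "continuous_on (cball z0 rc) G"
      by (rule continuous_on_subset[OF holomorphic_on_imp_continuous_on[OF hG]]) (use rc in auto)
    have "((\<lambda>u. G u / (u - X)) has_contour_integral (2 * of_real pi * \<i> * G X)) (circlepath z0 rc)"
      by (rule Cauchy_integral_circlepath[OF cG holomorphic_on_subset[OF hG]])
         (use rc Xb in \<open>auto simp: dist_norm norm_minus_commute\<close>)
    moreover have "G X = X" using P'nz[OF Xc] by (simp add: G_def Rf_def derivX)
    ultimately have "((\<lambda>u. G u / (u - X)) has_contour_integral (2 * of_real pi * \<i> * X)) (circlepath z0 rc)"
      by simp
    then have int0: "((\<lambda>u. f1 u / (A u + K * Q u - H) + K * (f2 u / (A u + K * Q u - H)))
                 has_contour_integral (2 * of_real pi * \<i> * X)) (circlepath z0 rc)"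
    proof (rule has_contour_integral_eq)
      fix u assume "u \<in> path_image (circlepath z0 rc)"
      then have u: "u \<in> sphere z0 rc" using rc by simp
      then have uX: "u \<noteq> X" using Xb by auto
      have uX': "u - X \<noteq> 0" using uX by simp
      have e0: "Rf u = Phi u / (u - X)" using uX PX by (simp add: Rf_def)
      have e1: "G u / (u - X) = u * Phi' u / Phi u"
        using uX' Pnz[OF u] by (simp add: G_def e0)
      have e2: "u * Phi' u / Phi u = f1 u / Phi u + K * (f2 u / Phi u)"
        by (simp add: Phi'_def f1_def f2_def add_divide_distrib algebra_simps)
      show "G u / (u - X) = f1 u / (A u + K * Q u - H) + K * (f2 u / (A u + K * Q u - H))"
        using e1 e2 by (simp add: Phi_def)
    qed
    have hk: "norm H + M * norm K < m"
    proof -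
      have "norm H + M * norm K < R + M * R"
        using hkx M by (intro add_less_le_mono mult_left_mono) (auto simp: H_def K_def)
      also have "\<dots> \<le> m / 2"
      proof -
        have "R \<le> m / (2 * (1 + M))" by (simp add: R_def)
        then have "R * (1 + M) \<le> m / 2" using M by (simp add: field_simps)
        then show ?thesis by (simp add: algebra_simps)
      qed
      finally show ?thesis using m by simp
    qed
    have cAs: "continuous_on (sphere z0 rc) A" and cQs: "continuous_on (sphere z0 rc) Q"
      by (auto intro: continuous_on_subset[OF cA] continuous_on_subset[OF cQ])
    define I1 where "I1 = contour_integral (circlepath z0 rc) (\<lambda>w. f1 w / (A w + K * Q w - H))"
    define I2 where "I2 = contour_integral (circlepath z0 rc) (\<lambda>w. f2 w / (A w + K * Q w - H))"
    have S1: "((\<lambda>(i,j). c1 i j * H^i * K^j) has_sum I1) UNIV"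
      unfolding c1_def I1_def by (rule series_lemma[OF rc(1) cf1 cAs cQs Am m M(2) hk])
    have S2: "((\<lambda>(i,j). c2 i j * H^i * K^j) has_sum I2) UNIV"
      unfolding c2_def I2_def by (rule series_lemma[OF rc(1) cf2 cAs cQs Am m M(2) hk])
    have Pnz': "A w + K * Q w - H \<noteq> 0" if "w \<in> sphere z0 rc" for w
      using Pnz[OF that] by (simp add: Phi_def)
    have Pnz'': "H \<noteq> A w + K * Q w" if "dist z0 w = rc" for w
      using Pnz'[of w] that by auto
    have i1: "(\<lambda>w. f1 w / (A w + K * Q w - H)) contour_integrable_on (circlepath z0 rc)"
      using rc by (intro contour_integrable_continuous_circlepath)
        (auto intro!: continuous_intros cf1 cAs cQs dest: Pnz''[OF sym])
    have i2: "(\<lambda>w. f2 w / (A w + K * Q w - H)) contour_integrable_on (circlepath z0 rc)"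
      using rc by (intro contour_integrable_continuous_circlepath)
        (auto intro!: continuous_intros cf2 cAs cQs dest: Pnz''[OF sym])
    have tot: "I1 + K * I2 = 2 * of_real pi * \<i> * X"
    proof -
      have "2 * of_real pi * \<i> * X = contour_integral (circlepath z0 rc)
              (\<lambda>u. f1 u / (A u + K * Q u - H) + K * (f2 u / (A u + K * Q u - H)))"
        using int0 by (rule contour_integral_unique[symmetric])
      also have "\<dots> = I1 + K * I2"
        unfolding I1_def I2_def
        by (simp only: contour_integral_add[OF i1 contour_integrable_lmul[OF i2]] contour_integral_lmul[OF i2])
      finally show ?thesis by simp
    qed
    define g2 where "g2 = (\<lambda>(i,j). if j = 0 then 0 else c2 i (j - 1) * H^i * K^j)"
    define sh where "sh = (\<lambda>(i::nat, j::nat). (i, Suc j))"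
    have injsh: "inj_on sh UNIV" by (auto simp: sh_def inj_on_def)
    have "((\<lambda>p. K * (case p of (i,j) \<Rightarrow> c2 i j * H^i * K^j)) has_sum K * I2) UNIV"
      by (rule has_sum_cmult_right[OF S2])
    then have "((g2 \<circ> sh) has_sum K * I2) UNIV"
      by (rule has_sum_cong[THEN iffD1, rotated]) (auto simp: g2_def sh_def)
    then have "(g2 has_sum K * I2) (sh ` UNIV)" using has_sum_reindex[OF injsh] by blast
    then have S2': "(g2 has_sum K * I2) UNIV"
    proof (rule has_sum_cong_neutral[THEN iffD1, rotated -1])
      fix p assume "p \<in> UNIV - sh ` UNIV"
      then obtain i j where p: "p = (i,j)" and "j = 0"
        by (cases p; cases "snd p") (auto simp: sh_def image_iff)
      then show "g2 p = 0" by (simp add: g2_def)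
    qed auto
    have "((\<lambda>p. (case p of (i,j) \<Rightarrow> c1 i j * H^i * K^j) + g2 p) has_sum I1 + K * I2) UNIV"
      by (rule has_sum_add[OF S1 S2'])
    then have "((\<lambda>p. (1 / (2 * of_real pi * \<i>)) * ((case p of (i,j) \<Rightarrow> c1 i j * H^i * K^j) + g2 p))
                  has_sum (1 / (2 * of_real pi * \<i>)) * (I1 + K * I2)) UNIV"
      by (rule has_sum_cmult_right)
    then have "((\<lambda>p. Re ((1 / (2 * of_real pi * \<i>)) * ((case p of (i,j) \<Rightarrow> c1 i j * H^i * K^j) + g2 p)))
                  has_sum Re ((1 / (2 * of_real pi * \<i>)) * (I1 + K * I2))) UNIV"
      by (rule has_sum_Re)
    moreover have "Re ((1 / (2 * of_real pi * \<i>)) * (I1 + K * I2)) = x"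
      by (simp add: tot X_def)
    moreover have "Re ((1 / (2 * of_real pi * \<i>)) * ((case p of (i,j) \<Rightarrow> c1 i j * H^i * K^j) + g2 p))
                   = (case p of (m,n) \<Rightarrow> coef m n * h^m * k^n)" for p
    proof -
      obtain i j where p: "p = (i,j)" by fastforce
      have eq: "(1 / (2 * of_real pi * \<i>)) * (c1 i j * H^i * K^j + g2 (i,j))
            = ((c1 i j + (if j = 0 then 0 else c2 i (j - 1))) / (2 * of_real pi * \<i>)) * of_real (h^i * k^j)"
        by (simp add: g2_def H_def K_def field_simps)
      have "Re ((1 / (2 * of_real pi * \<i>)) * ((case p of (i,j) \<Rightarrow> c1 i j * H^i * K^j) + g2 p))
          = Re (((c1 i j + (if j = 0 then 0 else c2 i (j - 1))) / (2 * of_real pi * \<i>)) * of_real (h^i * k^j))"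
        using eq by (simp add: p)
      also have "\<dots> = Re ((c1 i j + (if j = 0 then 0 else c2 i (j - 1))) / (2 * of_real pi * \<i>)) * (h^i * k^j)"
        by (rule Re_mult_ofreal)
      finally show ?thesis by (simp add: p coef_def)
    qed
    ultimately show "((\<lambda>(m,n). coef m n * h^m * k^n) has_sum x) UNIV" by simp
  qed
qed

definition phiF :: "real \<Rightarrow> real \<Rightarrow> real" where
  "phiF \<kappa> x = (1 - exp (- (\<kappa> * x))) / \<kappa>"
definition FF :: "real \<Rightarrow> real \<Rightarrow> real \<Rightarrow> real \<Rightarrow> real" where
  "FF \<alpha> \<kappa> z x = \<alpha> * (x - phiF \<kappa> x) + z * phiF \<kappa> x"
definition XX :: "real \<Rightarrow> real \<Rightarrow> real \<Rightarrow> real \<Rightarrow> real" where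
  "XX \<alpha> \<kappa> y z = (THE x. 0 < x \<and> FF \<alpha> \<kappa> z x = y)"

lemma phi_deriv: "\<kappa> > 0 \<Longrightarrow> (phiF \<kappa> has_real_derivative exp (- (\<kappa> * x))) (at x)"
  unfolding phiF_def[abs_def] by (auto intro!: derivative_eq_intros)

lemma FF_deriv: "\<kappa> > 0 \<Longrightarrow>
   (FF \<alpha> \<kappa> z has_real_derivative \<alpha> * (1 - exp (- (\<kappa> * x))) + z * exp (- (\<kappa> * x))) (at x)"
  unfolding FF_def[abs_def]
  by (auto intro!: derivative_eq_intros phi_deriv simp: algebra_simps)

lemma FF_cont: "\<kappa> > 0 \<Longrightarrow> continuous_on S (FF \<alpha> \<kappa> z)"
  using FF_deriv by (meson DERIV_continuous continuous_at_imp_continuous_on)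

lemma phi0 [simp]: "phiF \<kappa> 0 = 0" by (simp add: phiF_def)
lemma FF0 [simp]: "FF \<alpha> \<kappa> z 0 = 0" by (simp add: FF_def)

lemma phi_mono: "\<kappa> > 0 \<Longrightarrow> x1 \<le> x2 \<Longrightarrow> phiF \<kappa> x1 \<le> phiF \<kappa> x2"
  unfolding phiF_def by (intro divide_right_mono) auto

lemma phi_pos: "\<kappa> > 0 \<Longrightarrow> x > 0 \<Longrightarrow> phiF \<kappa> x > 0"
  unfolding phiF_def by (auto intro!: divide_pos_pos)

lemma phi_nonneg: "\<kappa> > 0 \<Longrightarrow> x \<ge> 0 \<Longrightarrow> phiF \<kappa> x \<ge> 0"
  using phi_mono[of \<kappa> 0 x] by simp

lemma phi_le: "\<kappa> > 0 \<Longrightarrow> phiF \<kappa> x \<le> x"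
proof -
  assume k: "\<kappa> > 0"
  have "1 + (- (\<kappa> * x)) \<le> exp (- (\<kappa> * x))" by (rule exp_ge_add_one_self)
  then have "1 - exp (- (\<kappa> * x)) \<le> \<kappa> * x" by simp
  then show ?thesis using k unfolding phiF_def by (simp add: divide_le_eq mult.commute)
qed

lemma phi_le_inv: "\<kappa> > 0 \<Longrightarrow> phiF \<kappa> x \<le> 1 / \<kappa>"
  unfolding phiF_def by (intro divide_right_mono) auto

lemma FF_strict:
  assumes k: "\<kappa> > 0" and a: "\<alpha> > 0" and z: "z \<ge> 0" and x1: "0 \<le> x1" and x12: "x1 < x2"
  shows "FF \<alpha> \<kappa> z x1 < FF \<alpha> \<kappa> z x2"
proof (rule DERIV_pos_imp_increasing_open[OF x12])
  fix x assume "x1 < x" "x < x2"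
  then have x: "x > 0" using x1 by simp
  have "exp (- (\<kappa> * x)) < 1" using k x by simp
  then have "\<alpha> * (1 - exp (- (\<kappa> * x))) + z * exp (- (\<kappa> * x)) > 0"
    using a z by (intro add_pos_nonneg) auto
  then show "\<exists>y. DERIV (FF \<alpha> \<kappa> z) x :> y \<and> 0 < y" using FF_deriv[OF k] by blast
qed (rule FF_cont[OF k])

lemma FF_lower: "\<kappa> > 0 \<Longrightarrow> \<alpha> > 0 \<Longrightarrow> z \<ge> 0 \<Longrightarrow> x \<ge> 0 \<Longrightarrow> FF \<alpha> \<kappa> z x \<ge> \<alpha> * (x - 1 / \<kappa>)"
  unfolding FF_def using phi_le_inv[of \<kappa> x] phi_nonneg[of \<kappa> x]
  by (smt (verit, best) mult_left_mono mult_nonneg_nonneg)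

lemma FF_upper: "\<kappa> > 0 \<Longrightarrow> \<alpha> > 0 \<Longrightarrow> z \<ge> 0 \<Longrightarrow> x \<ge> 0 \<Longrightarrow> FF \<alpha> \<kappa> z x \<le> (\<alpha> + z) * x"
  unfolding FF_def using phi_le[of \<kappa> x] phi_nonneg[of \<kappa> x]
  by (smt (verit, best) mult_left_mono distrib_right mult_nonneg_nonneg)

lemma FF_pos: "\<kappa> > 0 \<Longrightarrow> \<alpha> > 0 \<Longrightarrow> z \<ge> 0 \<Longrightarrow> x > 0 \<Longrightarrow> FF \<alpha> \<kappa> z x > 0"
  using FF_strict[of \<kappa> \<alpha> z 0 x] by simp

lemma FF_exists:
  assumes k: "\<kappa> > 0" and a: "\<alpha> > 0" and z: "z \<ge> 0" and y: "y > 0"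
  shows "\<exists>x>0. FF \<alpha> \<kappa> z x = y"
proof -
  define b where "b = y / \<alpha> + 1 / \<kappa>"
  have b: "b \<ge> 0" using a k y by (simp add: b_def)
  have "y \<le> \<alpha> * (b - 1 / \<kappa>)" using a by (simp add: b_def)
  also have "\<dots> \<le> FF \<alpha> \<kappa> z b" by (rule FF_lower[OF k a z b])
  finally have "y \<le> FF \<alpha> \<kappa> z b" .
  then obtain x where "0 \<le> x" "x \<le> b" "FF \<alpha> \<kappa> z x = y"
    using IVT'[of "FF \<alpha> \<kappa> z" 0 y b] FF_cont[OF k] y b by auto
  moreover have "x \<noteq> 0" using calculation y by auto
  ultimately show ?thesis by (intro exI[of _ x]) auto
qed

lemma FF_inj:
  assumes k: "\<kappa> > 0" and a: "\<alpha> > 0" and z: "z \<ge> 0" and "x1 \<ge> 0" "x2 \<ge> 0"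
    and "FF \<alpha> \<kappa> z x1 = FF \<alpha> \<kappa> z x2"
  shows "x1 = x2"
  using FF_strict[OF k a z, of x1 x2] FF_strict[OF k a z, of x2 x1] assms
  by (cases x1 x2 rule: linorder_cases) auto

lemma XX_props:
  assumes k: "\<kappa> > 0" and a: "\<alpha> > 0" and z: "z \<ge> 0" and y: "y > 0"
  shows "XX \<alpha> \<kappa> y z > 0" "FF \<alpha> \<kappa> z (XX \<alpha> \<kappa> y z) = y"
proof -
  obtain x where x: "x > 0" "FF \<alpha> \<kappa> z x = y" using FF_exists[OF assms] by blast
  have "XX \<alpha> \<kappa> y z = x"
    unfolding XX_def
    by (rule the_equality) (use x FF_inj[OF k a z] in force)+
  then show "XX \<alpha> \<kappa> y z > 0" "FF \<alpha> \<kappa> z (XX \<alpha> \<kappa> y z) = y" using x by auto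
qed

lemma XX_unique:
  assumes k: "\<kappa> > 0" and a: "\<alpha> > 0" and z: "z \<ge> 0" and y: "y > 0"
    and x: "x \<ge> 0" "FF \<alpha> \<kappa> z x = y"
  shows "x = XX \<alpha> \<kappa> y z"
  using FF_inj[OF k a z x(1), of "XX \<alpha> \<kappa> y z"] XX_props[OF k a z y] x by auto

lemma XX_gt:
  assumes k: "\<kappa> > 0" and a: "\<alpha> > 0" and z: "z \<ge> 0" and y: "y > 0"
    and x: "x \<ge> 0" "FF \<alpha> \<kappa> z x < y"
  shows "x < XX \<alpha> \<kappa> y z"
proof (rule ccontr)
  assume "\<not> x < XX \<alpha> \<kappa> y z"
  then have "XX \<alpha> \<kappa> y z \<le> x" by simp
  then have "FF \<alpha> \<kappa> z (XX \<alpha> \<kappa> y z) \<le> FF \<alpha> \<kappa> z x"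
    using FF_strict[OF k a z, of "XX \<alpha> \<kappa> y z" x] XX_props[OF k a z y]
    by (cases "XX \<alpha> \<kappa> y z = x") auto
  then show False using XX_props[OF k a z y] x by simp
qed

lemma XX_lt:
  assumes k: "\<kappa> > 0" and a: "\<alpha> > 0" and z: "z \<ge> 0" and y: "y > 0"
    and x: "x \<ge> 0" "FF \<alpha> \<kappa> z x > y"
  shows "XX \<alpha> \<kappa> y z < x"
proof (rule ccontr)
  assume "\<not> XX \<alpha> \<kappa> y z < x"
  then have "x \<le> XX \<alpha> \<kappa> y z" by simp
  then have "FF \<alpha> \<kappa> z x \<le> FF \<alpha> \<kappa> z (XX \<alpha> \<kappa> y z)"
    using FF_strict[OF k a z x(1), of "XX \<alpha> \<kappa> y z"]
    by (cases "XX \<alpha> \<kappa> y z = x") auto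
  then show False using XX_props[OF k a z y] x by simp
qed

lemma FF_shift: "FF \<alpha> \<kappa> (z0 + kk) x = FF \<alpha> \<kappa> z0 x + kk * phiF \<kappa> x"
  by (simp add: FF_def algebra_simps)

lemma XX_cont:
  assumes k: "\<kappa> > 0" and a: "\<alpha> > 0" and y0: "y0 > 0" and z0: "z0 \<ge> 0" and e: "\<epsilon> > 0"
  shows "\<exists>\<delta>>0. \<delta> \<le> y0 \<and> (\<forall>h kk. \<bar>h\<bar> < \<delta> \<and> \<bar>kk\<bar> < \<delta> \<and> z0 + kk \<ge> 0 \<longrightarrow>
            \<bar>XX \<alpha> \<kappa> (y0 + h) (z0 + kk) - XX \<alpha> \<kappa> y0 z0\<bar> < \<epsilon>)"
proof -
  define x0 where "x0 = XX \<alpha> \<kappa> y0 z0"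
  have x0: "x0 > 0" "FF \<alpha> \<kappa> z0 x0 = y0" using XX_props[OF k a z0 y0] by (auto simp: x0_def)
  define e where "e = min \<epsilon> (x0 / 2)"
  have e0: "e > 0" "e \<le> \<epsilon>" "x0 - e > 0" using e x0 by (auto simp: e_def)
  define L where "L = FF \<alpha> \<kappa> z0 (x0 - e)"
  define U where "U = FF \<alpha> \<kappa> z0 (x0 + e)"
  have L: "L < y0" using FF_strict[OF k a z0, of "x0 - e" x0] e0 x0 by (simp add: L_def)
  have U: "U > y0" using FF_strict[OF k a z0, of x0 "x0 + e"] e0 x0 by (simp add: U_def)
  have L0: "L > 0" using FF_pos[OF k a z0, of "x0 - e"] e0 by (simp add: L_def)
  define P where "P = phiF \<kappa> (x0 + e)"
  have P: "P > 0" using phi_pos[OF k, of "x0 + e"] e0 x0 by (simp add: P_def)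
  define d where "d = min (y0 - L) (U - y0)"
  have d: "d > 0" "d \<le> y0 - L" "d \<le> U - y0" using L U by (auto simp: d_def)
  define \<delta> where "\<delta> = d / (2 * (1 + P))"
  have \<delta>0: "\<delta> > 0" using d P by (simp add: \<delta>_def)
  have \<delta>P: "\<delta> * P < d / 2" and \<delta>d: "\<delta> \<le> d / 2"
  proof -
    have "\<delta> * (1 + P) = d / 2" using P unfolding \<delta>_def by (simp add: field_simps)
    then show "\<delta> * P < d / 2" "\<delta> \<le> d / 2" using \<delta>0 P by (auto simp: algebra_simps)
  qed
  have \<delta>y: "\<delta> \<le> y0" using \<delta>d d L0 by simp
  show ?thesis
  proof (intro exI[of _ \<delta>] conjI \<delta>0 \<delta>y allI impI)
    fix h kk assume hk: "\<bar>h\<bar> < \<delta> \<and> \<bar>kk\<bar> < \<delta> \<and> z0 + kk \<ge> 0"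
    define z where "z = z0 + kk"
    have z: "z \<ge> 0" using hk by (simp add: z_def)
    have y: "y0 + h > 0" using hk \<delta>y by linarith
    have bnd: "\<bar>kk * phiF \<kappa> x\<bar> < d / 2" if "0 \<le> x" "x \<le> x0 + e" for x
    proof -
      have "0 \<le> phiF \<kappa> x" "phiF \<kappa> x \<le> P"
        using phi_nonneg[OF k that(1)] phi_mono[OF k that(2)] by (auto simp: P_def)
      then have "\<bar>kk * phiF \<kappa> x\<bar> \<le> \<delta> * P"
        using hk \<delta>0 by (simp add: abs_mult) (meson abs_ge_zero less_imp_le mult_mono)
      then show ?thesis using \<delta>P by simp
    qed
    have "FF \<alpha> \<kappa> z (x0 - e) < y0 + h"
      using bnd[of "x0 - e"] e0 hk \<delta>d d unfolding z_def FF_shift L_def[symmetric] by auto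
    then have lo: "x0 - e < XX \<alpha> \<kappa> (y0 + h) z" using XX_gt[OF k a z y] e0 by simp
    have "FF \<alpha> \<kappa> z (x0 + e) > y0 + h"
      using bnd[of "x0 + e"] e0 x0 hk \<delta>d d unfolding z_def FF_shift U_def[symmetric] by auto
    then have hi: "XX \<alpha> \<kappa> (y0 + h) z < x0 + e" using XX_lt[OF k a z y] e0 x0 by simp
    show "\<bar>XX \<alpha> \<kappa> (y0 + h) (z0 + kk) - XX \<alpha> \<kappa> y0 z0\<bar> < \<epsilon>"
      using lo hi e0 by (simp add: z_def x0_def[symmetric] abs_less_iff)
  qed
qed

definition Ysol :: "real \<Rightarrow> real \<Rightarrow> real \<Rightarrow> real \<Rightarrow> real \<Rightarrow> real \<Rightarrow> real" where
  "Ysol \<alpha> \<kappa> y0 z0 xh x = - y0 + \<alpha> * x + (z0 - \<alpha>) * exp (- (\<kappa> * xh)) * (exp (\<kappa> * x) - 1) / \<kappa>"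

lemma exp_cancel1: "exp (- (k * x)) * exp (k * x) = (1::real)"
  by (simp add: exp_minus field_simps)

lemma fbp_exists:
  assumes a: "a > 0" and b: "b > 0" and c: "c > 0" and xh: "xh > 0"
    and F: "FF (c / b) (b / a) z0 xh = y0"
  shows "fbp_solution a b c y0 z0 (Ysol (c / b) (b / a) y0 z0 xh) xh"
proof -
  define \<alpha> where "\<alpha> = c / b"
  define \<kappa> where "\<kappa> = b / a"
  have k: "\<kappa> > 0" using a b by (simp add: \<kappa>_def)
  define C where "C = (z0 - \<alpha>) * exp (- (\<kappa> * xh))"
  define y' where "y' = (\<lambda>x. \<alpha> + C * exp (\<kappa> * x))"
  define y'' where "y'' = (\<lambda>x. \<kappa> * C * exp (\<kappa> * x))"
  have Y: "Ysol \<alpha> \<kappa> y0 z0 xh = (\<lambda>x. - y0 + \<alpha> * x + C * (exp (\<kappa> * x) - 1) / \<kappa>)"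
    by (simp add: Ysol_def C_def fun_eq_iff)
  have dY: "(Ysol \<alpha> \<kappa> y0 z0 xh has_real_derivative y' x) (at x)" for x
    unfolding Y y'_def using k by (auto intro!: derivative_eq_intros)
  have dY': "(y' has_real_derivative y'' x) (at x)" for x
    unfolding y'_def y''_def by (auto intro!: derivative_eq_intros)
  have ode: "b * y' x - a * y'' x - c = 0" for x
  proof -
    have "b * \<alpha> = c" using b by (simp add: \<alpha>_def)
    moreover have "a * \<kappa> = b" using a by (simp add: \<kappa>_def)
    ultimately show ?thesis unfolding y'_def y''_def
      by (simp add: algebra_simps)
  qed
  have end0: "Ysol \<alpha> \<kappa> y0 z0 xh xh = 0"
  proof -
    have "Ysol \<alpha> \<kappa> y0 z0 xh xh = - y0 + \<alpha> * xh + (z0 - \<alpha>) * ((1 - exp (- (\<kappa> * xh))) / \<kappa>)"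
      unfolding Ysol_def using exp_cancel1[of \<kappa> xh] by (simp add: algebra_simps)
    also have "\<dots> = - y0 + FF \<alpha> \<kappa> z0 xh" using k by (simp add: FF_def phiF_def field_simps)
    finally show ?thesis using F by (simp add: \<alpha>_def \<kappa>_def)
  qed
  have st: "Ysol \<alpha> \<kappa> y0 z0 xh 0 = - y0" by (simp add: Ysol_def)
  have dend: "y' xh = z0" unfolding y'_def C_def
    using exp_cancel1[of \<kappa> xh] by (simp add: algebra_simps)
  show ?thesis
    unfolding fbp_solution_def \<alpha>_def[symmetric] \<kappa>_def[symmetric]
    apply (intro conjI xh)
    apply (rule exI[of _ y'], rule exI[of _ y''])
    using xh end0 st ode
    by (auto intro: has_field_derivative_at_within dY dY' simp: dend)
qed

lemma fbp_char:
  assumes a: "a > 0" and b: "b > 0" and c: "c > 0"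
    and S: "fbp_solution a b c y0 z0 y xh"
  shows "xh > 0 \<and> FF (c / b) (b / a) z0 xh = y0 \<and> (\<forall>x\<in>{0..xh}. y x = Ysol (c / b) (b / a) y0 z0 xh x)"
proof -
  define \<alpha> where "\<alpha> = c / b"
  define \<kappa> where "\<kappa> = b / a"
  have k: "\<kappa> > 0" using a b by (simp add: \<kappa>_def)
  obtain y' y'' where xh: "xh > 0"
    and d1: "\<And>x. x \<in> {0..xh} \<Longrightarrow> (y has_real_derivative y' x) (at x within {0..xh})"
    and d2: "\<And>x. x \<in> {0<..<xh} \<Longrightarrow> (y' has_real_derivative y'' x) (at x)"
    and ode: "\<And>x. x \<in> {0<..<xh} \<Longrightarrow> b * y' x - a * y'' x - c = 0"
    and yend: "y xh = 0" and y0: "y 0 = - y0" and z0: "y' xh = z0"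
    using S unfolding fbp_solution_def by blast
  define u where "u = (\<lambda>x. (y' x - \<alpha>) * exp (- (\<kappa> * x)))"
  have du: "(u has_real_derivative 0) (at x within {0<..<xh})" if x: "x \<in> {0<..<xh}" for x
  proof -
    have "(u has_real_derivative (y'' x * exp (- (\<kappa> * x)) + (y' x - \<alpha>) * (exp (- (\<kappa> * x)) * (- \<kappa>)))) (at x)"
      unfolding u_def by (auto intro!: derivative_eq_intros d2[OF x])
    moreover have "y'' x * exp (- (\<kappa> * x)) + (y' x - \<alpha>) * (exp (- (\<kappa> * x)) * (- \<kappa>)) = 0"
    proof -
      have "y'' x = \<kappa> * y' x - \<kappa> * \<alpha>"
        using ode[OF x] a b by (simp add: \<kappa>_def \<alpha>_def field_simps)
      have "y'' x * exp (- (\<kappa> * x)) + (y' x - \<alpha>) * (exp (- (\<kappa> * x)) * (- \<kappa>))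
            = (y'' x - (\<kappa> * y' x - \<kappa> * \<alpha>)) * exp (- (\<kappa> * x))" by (simp add: algebra_simps)
      then show ?thesis using \<open>y'' x = \<kappa> * y' x - \<kappa> * \<alpha>\<close> by simp
    qed
    ultimately show ?thesis by (auto intro: has_field_derivative_at_within)
  qed
  obtain K0 where K0: "\<And>x. x \<in> {0<..<xh} \<Longrightarrow> u x = K0"
    using has_field_derivative_zero_constant[OF convex_real_interval(8) du] by blast
  have y'form: "y' x = \<alpha> + K0 * exp (\<kappa> * x)" if x: "x \<in> {0<..<xh}" for x
  proof -
    have "(y' x - \<alpha>) * exp (- (\<kappa> * x)) * exp (\<kappa> * x) = K0 * exp (\<kappa> * x)"
      using K0[OF x] by (simp add: u_def)
    then show ?thesis using exp_cancel1[of \<kappa> x] by (simp add: algebra_simps)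
  qed
  define v where "v = (\<lambda>x. y x - \<alpha> * x - K0 / \<kappa> * exp (\<kappa> * x))"
  have cy: "continuous_on {0..xh} y" by (rule DERIV_continuous_on[OF d1])
  have cv: "continuous_on {0..xh} v" unfolding v_def by (intro continuous_intros cy)
  have dv: "(v has_real_derivative 0) (at x)" if x: "x \<in> {0<..<xh}" for x
  proof -
    have "(y has_real_derivative y' x) (at x)"
      using d1[of x] x by (simp add: at_within_Icc_at)
    then have "(v has_real_derivative (y' x - \<alpha> - K0 / \<kappa> * (exp (\<kappa> * x) * \<kappa>))) (at x)"
      unfolding v_def by (auto intro!: derivative_eq_intros)
    moreover have "y' x - \<alpha> - K0 / \<kappa> * (exp (\<kappa> * x) * \<kappa>) = 0" using y'form[OF x] k by simp
    ultimately show ?thesis by simp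
  qed
  have vconst: "v x = v 0" if x: "x \<in> {0..xh}" for x
  proof (cases "x = 0")
    case False
    then have "0 < x" using x by simp
    then show ?thesis
      by (rule DERIV_isconst_end[OF _ continuous_on_subset[OF cv]]) (use x dv in auto)
  qed simp
  define E where "E = (\<lambda>x. - y0 + \<alpha> * x + K0 / \<kappa> * (exp (\<kappa> * x) - 1))"
  have yE: "y x = E x" if "x \<in> {0..xh}" for x
    using vconst[OF that] y0 by (simp add: v_def E_def algebra_simps)
  have "(E has_real_derivative \<alpha> + K0 / \<kappa> * (exp (\<kappa> * xh) * \<kappa>)) (at xh within {0..xh})"
    unfolding E_def by (auto intro!: derivative_eq_intros)
  then have "(y has_real_derivative \<alpha> + K0 / \<kappa> * (exp (\<kappa> * xh) * \<kappa>)) (at xh within {0..xh})"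
    by (rule has_field_derivative_transform_within[where d = 1]) (use xh yE in auto)
  moreover have "(y has_real_derivative z0) (at xh within {0..xh})" using d1[of xh] xh z0 by simp
  moreover have "at xh within {0..xh} \<noteq> bot" using xh by (simp add: at_within_Icc_at_left)
  ultimately have "\<alpha> + K0 / \<kappa> * (exp (\<kappa> * xh) * \<kappa>) = z0" by (rule has_field_derivative_unique)
  then have e1: "K0 * exp (\<kappa> * xh) = z0 - \<alpha>" using k by simp
  have "K0 = K0 * exp (\<kappa> * xh) * exp (- (\<kappa> * xh))" by (simp add: exp_minus)
  then have K0v: "K0 = (z0 - \<alpha>) * exp (- (\<kappa> * xh))" using e1 by simp
  have Eform: "E x = Ysol \<alpha> \<kappa> y0 z0 xh x" for x
    using k by (simp add: E_def Ysol_def K0v field_simps)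
  have "FF \<alpha> \<kappa> z0 xh = y0"
  proof -
    have "0 = E xh" using yE[of xh] yend xh by simp
    also have "\<dots> = - y0 + \<alpha> * xh + (z0 - \<alpha>) * ((1 - exp (- (\<kappa> * xh))) / \<kappa>)"
      unfolding Eform Ysol_def using exp_cancel1[of \<kappa> xh] by (simp add: algebra_simps)
    also have "\<dots> = - y0 + FF \<alpha> \<kappa> z0 xh" using k by (simp add: FF_def phiF_def field_simps)
    finally show ?thesis by simp
  qed
  then show ?thesis using xh yE Eform by (simp add: \<alpha>_def \<kappa>_def)
qed

lemma has_sum_k0:
  fixes coef :: "nat \<Rightarrow> nat \<Rightarrow> real"
  assumes "((\<lambda>(m,n). coef m n * h^m * (0::real)^n) has_sum s) UNIV"
  shows "((\<lambda>m. coef m 0 * h^m) has_sum s) UNIV"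
proof -
  let ?g = "\<lambda>(m,n). coef m n * h^m * (0::real)^n"
  have "(?g has_sum s) (range (\<lambda>m::nat. (m, 0::nat)))"
  proof (rule has_sum_cong_neutral[THEN iffD1, OF _ _ _ assms])
    fix p assume "p \<in> UNIV - range (\<lambda>m::nat. (m, 0::nat))"
    then obtain m n where "p = (m,n)" "n \<noteq> 0" by (cases p) auto
    then show "?g p = 0" by simp
  qed auto
  then have "((?g \<circ> (\<lambda>m::nat. (m, 0::nat))) has_sum s) UNIV"
    by (subst has_sum_reindex[symmetric]) (auto simp: inj_on_def)
  then show ?thesis by (simp add: o_def)
qed

definition phiC :: "real \<Rightarrow> complex \<Rightarrow> complex" where
  "phiC \<kappa> w = (1 - exp (- (of_real \<kappa> * w))) / of_real \<kappa>"

lemma phiC_real: "phiC \<kappa> (of_real x) = of_real (phiF \<kappa> x)"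
  by (simp add: phiC_def phiF_def flip: exp_of_real)

lemma analytic_at:
  assumes k: "\<kappa> > 0" and a: "\<alpha> > 0" and y0: "y0 > 0" and z0: "z0 \<ge> 0"
  shows "\<exists>r>0. \<exists>coef::nat\<Rightarrow>nat\<Rightarrow>real. \<forall>h kk. \<bar>h\<bar> < r \<and> \<bar>kk\<bar> < r \<and> z0 + kk \<ge> 0 \<longrightarrow>
           ((\<lambda>(m,n). coef m n * h^m * kk^n) has_sum XX \<alpha> \<kappa> (y0 + h) (z0 + kk)) UNIV"
proof -
  define x0 where "x0 = XX \<alpha> \<kappa> y0 z0"
  have x0: "x0 > 0" "FF \<alpha> \<kappa> z0 x0 = y0" using XX_props[OF k a z0 y0] by (auto simp: x0_def)
  define A where "A = (\<lambda>w::complex. of_real \<alpha> * (w - phiC \<kappa> w) + of_real z0 * phiC \<kappa> w - of_real y0)"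
  define A' where "A' = (\<lambda>w::complex. of_real \<alpha> * (1 - exp (- (of_real \<kappa> * w))) + of_real z0 * exp (- (of_real \<kappa> * w)))"
  define Q' where "Q' = (\<lambda>w::complex. exp (- (of_real \<kappa> * w)))"
  have kC: "(of_real \<kappa> :: complex) \<noteq> 0" using k by simp
  have dQ: "(phiC \<kappa> has_field_derivative Q' w) (at w)" for w
    unfolding phiC_def[abs_def] Q'_def using kC
    by (auto intro!: derivative_eq_intros simp: field_simps)
  have dA: "(A has_field_derivative A' w) (at w)" for w
    unfolding A_def A'_def
    by (rule derivative_eq_intros dQ refl | simp add: Q'_def algebra_simps)+
  have hA': "A' holomorphic_on UNIV" unfolding A'_def by (intro holomorphic_intros)
  have hQ': "Q' holomorphic_on UNIV" unfolding Q'_def by (intro holomorphic_intros)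
  have Areal: "A (of_real x) = of_real (FF \<alpha> \<kappa> z0 x - y0)" for x
    by (simp add: A_def phiC_real FF_def)
  have A0: "A (of_real x0) = 0" using x0 by (simp add: Areal)
  have "A' (of_real x0) = of_real (\<alpha> * (1 - exp (- (\<kappa> * x0))) + z0 * exp (- (\<kappa> * x0)))"
    by (simp add: A'_def flip: exp_of_real)
  moreover have "\<alpha> * (1 - exp (- (\<kappa> * x0))) + z0 * exp (- (\<kappa> * x0)) > 0"
    using k x0 a z0 by (intro add_pos_nonneg) auto
  ultimately have D: "A' (of_real x0) \<noteq> 0" by (metis of_real_eq_0_iff less_irrefl)
  obtain r1 coef where r1: "r1 > 0" and
    H: "\<And>h kk x. \<bar>h\<bar> < r1 \<and> \<bar>kk\<bar> < r1 \<and> \<bar>x - x0\<bar> < r1 \<and>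
            A (of_real x) + of_real kk * phiC \<kappa> (of_real x) = of_real h \<Longrightarrow>
            ((\<lambda>(m,n). coef m n * h^m * kk^n) has_sum x) UNIV"
    using implicit_analytic[OF dA dQ hA' hQ' A0 D] by blast
  obtain \<delta> where \<delta>: "\<delta> > 0" "\<delta> \<le> y0"
    "\<And>h kk. \<bar>h\<bar> < \<delta> \<and> \<bar>kk\<bar> < \<delta> \<and> z0 + kk \<ge> 0 \<Longrightarrow>
            \<bar>XX \<alpha> \<kappa> (y0 + h) (z0 + kk) - XX \<alpha> \<kappa> y0 z0\<bar> < r1"
    using XX_cont[OF k a y0 z0 r1] by blast
  show ?thesis
  proof (intro exI[of _ "min r1 \<delta>"] conjI exI[of _ coef] allI impI)
    show "min r1 \<delta> > 0" using r1 \<delta> by simp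
    fix h kk assume hk: "\<bar>h\<bar> < min r1 \<delta> \<and> \<bar>kk\<bar> < min r1 \<delta> \<and> z0 + kk \<ge> 0"
    define x where "x = XX \<alpha> \<kappa> (y0 + h) (z0 + kk)"
    have yh: "y0 + h > 0" using hk \<delta> by linarith
    have zk: "z0 + kk \<ge> 0" using hk by simp
    have Fx: "FF \<alpha> \<kappa> (z0 + kk) x = y0 + h" using XX_props[OF k a zk yh] by (simp add: x_def)
    have "\<bar>x - x0\<bar> < r1" using \<delta>(3)[of h kk] hk by (simp add: x_def x0_def)
    moreover have "A (of_real x) + of_real kk * phiC \<kappa> (of_real x) = of_real h"
    proof -
      have "FF \<alpha> \<kappa> z0 x - y0 + kk * phiF \<kappa> x = h" using Fx by (simp add: FF_shift)
      then have "of_real (FF \<alpha> \<kappa> z0 x - y0 + kk * phiF \<kappa> x) = (of_real h :: complex)" by simp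
      then show ?thesis by (simp add: Areal phiC_real del: of_real_diff)
    qed
    ultimately show "((\<lambda>(m,n). coef m n * h^m * kk^n) has_sum XX \<alpha> \<kappa> (y0 + h) (z0 + kk)) UNIV"
      using H[of h kk x] hk unfolding x_def by simp
  qed
qed

lemma XX_mono_y:
  assumes k: "\<kappa> > 0" and a: "\<alpha> > 0" and z: "z \<ge> 0" and y1: "y1 > 0" and y12: "y1 < y2"
  shows "XX \<alpha> \<kappa> y1 z < XX \<alpha> \<kappa> y2 z"
proof -
  have y2: "y2 > 0" using y1 y12 by simp
  show ?thesis using XX_props[OF k a z y1] y12 by (intro XX_gt[OF k a z y2]) auto
qed

lemma XX_anti_z:
  assumes k: "\<kappa> > 0" and a: "\<alpha> > 0" and y: "y > 0" and z1: "z1 \<ge> 0" and z12: "z1 < z2"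
  shows "XX \<alpha> \<kappa> y z2 < XX \<alpha> \<kappa> y z1"
proof -
  have z2: "z2 \<ge> 0" using z1 z12 by simp
  define x where "x = XX \<alpha> \<kappa> y z1"
  have x: "x > 0" "FF \<alpha> \<kappa> z1 x = y" using XX_props[OF k a z1 y] by (auto simp: x_def)
  have "FF \<alpha> \<kappa> z2 x = FF \<alpha> \<kappa> z1 x + (z2 - z1) * phiF \<kappa> x"
    using FF_shift[of \<alpha> \<kappa> z1 "z2 - z1" x] by simp
  moreover have "(z2 - z1) * phiF \<kappa> x > 0" using phi_pos[OF k x(1)] z12 by simp
  ultimately have "FF \<alpha> \<kappa> z2 x > y" using x by simp
  then show ?thesis using XX_lt[OF k a z2 y] x by (simp add: x_def)
qed

lemma XX_at_top:
  assumes k: "\<kappa> > 0" and a: "\<alpha> > 0" and z: "z \<ge> 0"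
  shows "filterlim (\<lambda>y. XX \<alpha> \<kappa> y z) at_top at_top"
  unfolding filterlim_at_top
proof
  fix Z :: real
  show "eventually (\<lambda>y. Z \<le> XX \<alpha> \<kappa> y z) at_top"
    using eventually_ge_at_top[of "max 1 (Z * (\<alpha> + z))"]
  proof eventually_elim
    case (elim y)
    then have y: "y > 0" by simp
    have az: "\<alpha> + z > 0" using a z by simp
    have "y = FF \<alpha> \<kappa> z (XX \<alpha> \<kappa> y z)" using XX_props[OF k a z y] by simp
    also have "\<dots> \<le> (\<alpha> + z) * XX \<alpha> \<kappa> y z"
      using XX_props[OF k a z y] by (intro FF_upper[OF k a z]) simp
    finally have "y \<le> (\<alpha> + z) * XX \<alpha> \<kappa> y z" .
    moreover have "Z * (\<alpha> + z) \<le> y" using elim by simp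
    ultimately have "Z * (\<alpha> + z) \<le> XX \<alpha> \<kappa> y z * (\<alpha> + z)" by (simp add: mult.commute)
    then show ?case using az by simp
  qed
qed

lemma XX_at_right0:
  assumes k: "\<kappa> > 0" and a: "\<alpha> > 0" and z: "z \<ge> 0"
  shows "((\<lambda>y. XX \<alpha> \<kappa> y z) \<longlongrightarrow> 0) (at_right 0)"
proof (rule tendstoI)
  fix e :: real assume e: "e > 0"
  have Fe: "FF \<alpha> \<kappa> z e > 0" by (rule FF_pos[OF k a z e])
  show "eventually (\<lambda>y. dist (XX \<alpha> \<kappa> y z) 0 < e) (at_right 0)"
    using eventually_at_right_real[OF Fe]
  proof eventually_elim
    case (elim y)
    then have y: "y > 0" "y < FF \<alpha> \<kappa> z e" by auto
    have "XX \<alpha> \<kappa> y z < e" using XX_lt[OF k a z y(1)] e y by simp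
    then show ?case using XX_props(1)[OF k a z y(1)] by simp
  qed
qed

lemma XX_z_top:
  assumes k: "\<kappa> > 0" and a: "\<alpha> > 0" and y: "y > 0"
  shows "((\<lambda>z. XX \<alpha> \<kappa> y z) \<longlongrightarrow> 0) at_top"
proof (rule tendstoI)
  fix e :: real assume e: "e > 0"
  have P: "phiF \<kappa> e > 0" by (rule phi_pos[OF k e])
  show "eventually (\<lambda>z. dist (XX \<alpha> \<kappa> y z) 0 < e) at_top"
    using eventually_ge_at_top[of "y / phiF \<kappa> e + 1"]
  proof eventually_elim
    case (elim z)
    have z: "z \<ge> 0" using elim P y by (smt (verit) divide_nonneg_pos)
    have "y < z * phiF \<kappa> e"
    proof -
      have "y / phiF \<kappa> e < z" using elim by simp
      then show ?thesis using P by (simp add: pos_divide_less_eq)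
    qed
    also have "\<dots> \<le> FF \<alpha> \<kappa> z e"
      using phi_le[OF k, of e] a unfolding FF_def by simp
    finally have "XX \<alpha> \<kappa> y z < e" using XX_lt[OF k a z y] e by simp
    then show ?case using XX_props(1)[OF k a z y] by simp
  qed
qed

lemma XX_z_right0:
  assumes k: "\<kappa> > 0" and a: "\<alpha> > 0" and y: "y > 0"
  shows "((\<lambda>z. XX \<alpha> \<kappa> y z) \<longlongrightarrow> XX \<alpha> \<kappa> y 0) (at_right 0)"
proof (rule tendstoI)
  fix e :: real assume e: "e > 0"
  obtain \<delta> where \<delta>: "\<delta> > 0"
    "\<And>h kk. \<bar>h\<bar> < \<delta> \<and> \<bar>kk\<bar> < \<delta> \<and> 0 + kk \<ge> 0 \<Longrightarrow>
            \<bar>XX \<alpha> \<kappa> (y + h) (0 + kk) - XX \<alpha> \<kappa> y 0\<bar> < e"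
    using XX_cont[OF k a y order_refl e] by blast
  show "eventually (\<lambda>z. dist (XX \<alpha> \<kappa> y z) (XX \<alpha> \<kappa> y 0) < e) (at_right 0)"
    using eventually_at_right_real[OF \<delta>(1)]
  proof eventually_elim
    case (elim z)
    then show ?case using \<delta>(2)[of 0 z] \<delta>(1) by (simp add: dist_real_def)
  qed
qed

theorem lemma4p2:
  fixes a b c :: real
  assumes "a > 0" and "b > 0" and "c > 0"
  shows
    "(\<forall>y0>0. \<forall>z0>0.
        (\<exists>y xh. fbp_solution a b c y0 z0 y xh) \<and>
        (\<forall>y1 x1 y2 x2. fbp_solution a b c y0 z0 y1 x1 \<and> fbp_solution a b c y0 z0 y2 x2
            \<longrightarrow> x1 = x2 \<and> (\<forall>x\<in>{0..x1}. y1 x = y2 x)))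
   \<and> (\<forall>z0>0. strict_mono_on {0<..} (\<lambda>y0. xhat a b c y0 z0))
   \<and> (\<forall>y0>0. \<forall>z1 z2. 0 < z1 \<and> z1 < z2 \<longrightarrow> xhat a b c y0 z2 < xhat a b c y0 z1)
   \<and> (\<forall>z0>0. filterlim (\<lambda>y0. xhat a b c y0 z0) at_top at_top)
   \<and> (\<forall>z0>0. ((\<lambda>y0. xhat a b c y0 z0) \<longlongrightarrow> 0) (at_right 0))
   \<and> (\<forall>y0>0. ((\<lambda>z0. xhat a b c y0 z0) \<longlongrightarrow> 0) at_top)
   \<and> (\<exists>xc :: real \<Rightarrow> real.
        (\<forall>y0>0. xc y0 > 0)
      \<and> (\<forall>y0>0. ((\<lambda>z0. xhat a b c y0 z0) \<longlongrightarrow> xc y0) (at_right 0))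
      \<and> strict_mono_on {0<..} xc
      \<and> (xc \<longlongrightarrow> 0) (at_right 0)
      \<and> filterlim xc at_top at_top
      \<and> real_analytic_on xc {0<..})
   \<and> real_analytic2_on (\<lambda>y0 z0. xhat a b c y0 z0) ({0<..} \<times> {0<..})"
proof -
  note abc = assms
  define \<alpha> where "\<alpha> = c / b"
  define \<kappa> where "\<kappa> = b / a"
  have k: "\<kappa> > 0" and al: "\<alpha> > 0" using abc by (auto simp: \<alpha>_def \<kappa>_def)
  have char: "x > 0 \<and> FF \<alpha> \<kappa> z0 x = y0 \<and> (\<forall>t\<in>{0..x}. y t = Ysol \<alpha> \<kappa> y0 z0 x t)"
    if "fbp_solution a b c y0 z0 y x" for y0 z0 y x
    using fbp_char[OF abc that] by (simp add: \<alpha>_def \<kappa>_def)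
  have ex: "fbp_solution a b c y0 z0 (Ysol \<alpha> \<kappa> y0 z0 (XX \<alpha> \<kappa> y0 z0)) (XX \<alpha> \<kappa> y0 z0)"
    if "y0 > 0" "z0 > 0" for y0 z0
  proof -
    have z: "z0 \<ge> 0" using that by simp
    show ?thesis unfolding \<alpha>_def \<kappa>_def
      using XX_props[OF k al z that(1)]
      by (intro fbp_exists[OF abc]) (auto simp: \<alpha>_def \<kappa>_def)
  qed
  have sol_x: "x = XX \<alpha> \<kappa> y0 z0" if "fbp_solution a b c y0 z0 y x" "y0 > 0" "z0 > 0" for y0 z0 y x
    using char[OF that(1)] XX_unique[OF k al _ that(2), of z0 x] that(3) by auto
  have xhat_eq: "xhat a b c y0 z0 = XX \<alpha> \<kappa> y0 z0" if "y0 > 0" "z0 > 0" for y0 z0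
    unfolding xhat_def
  proof (rule the_equality)
    show "\<exists>y. fbp_solution a b c y0 z0 y (XX \<alpha> \<kappa> y0 z0)" using ex[OF that] by blast
    fix x assume "\<exists>y. fbp_solution a b c y0 z0 y x"
    then show "x = XX \<alpha> \<kappa> y0 z0" using sol_x that by blast
  qed
  have P1: "\<forall>y0>0. \<forall>z0>0.
        (\<exists>y xh. fbp_solution a b c y0 z0 y xh) \<and>
        (\<forall>y1 x1 y2 x2. fbp_solution a b c y0 z0 y1 x1 \<and> fbp_solution a b c y0 z0 y2 x2
            \<longrightarrow> x1 = x2 \<and> (\<forall>x\<in>{0..x1}. y1 x = y2 x))"
  proof (intro allI impI conjI)
    fix y0 z0 :: real assume y0: "y0 > 0" and z0: "z0 > 0"
    show "\<exists>y xh. fbp_solution a b c y0 z0 y xh" using ex[OF y0 z0] by blast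
    fix y1 x1 y2 x2
    assume S: "fbp_solution a b c y0 z0 y1 x1 \<and> fbp_solution a b c y0 z0 y2 x2"
    then have e: "x1 = x2" using sol_x y0 z0 by metis
    show "x1 = x2" by (rule e)
    show "\<forall>x\<in>{0..x1}. y1 x = y2 x" using char[of y0 z0 y1 x1] char[of y0 z0 y2 x2] S e by auto
  qed
  have P2: "\<forall>z0>0. strict_mono_on {0<..} (\<lambda>y0. xhat a b c y0 z0)"
  proof (intro allI impI strict_mono_onI)
    fix z0 r s :: real assume z0: "z0 > 0" and r: "r \<in> {0<..}" and s: "s \<in> {0<..}" and rs: "r < s"
    show "xhat a b c r z0 < xhat a b c s z0"
      using XX_mono_y[OF k al _ _ rs, of z0] z0 r s by (simp add: xhat_eq)
  qed
  have P3: "\<forall>y0>0. \<forall>z1 z2. 0 < z1 \<and> z1 < z2 \<longrightarrow> xhat a b c y0 z2 < xhat a b c y0 z1"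
    using XX_anti_z[OF k al] by (auto simp: xhat_eq)
  have P4: "\<forall>z0>0. filterlim (\<lambda>y0. xhat a b c y0 z0) at_top at_top"
  proof (intro allI impI)
    fix z0 :: real assume z0: "z0 > 0"
    have "eventually (\<lambda>y. XX \<alpha> \<kappa> y z0 = xhat a b c y z0) at_top"
      using eventually_gt_at_top[of 0] by eventually_elim (simp add: xhat_eq z0)
    then show "filterlim (\<lambda>y0. xhat a b c y0 z0) at_top at_top"
      using XX_at_top[OF k al, of z0] z0 filterlim_cong by fastforce
  qed
  have P5: "\<forall>z0>0. ((\<lambda>y0. xhat a b c y0 z0) \<longlongrightarrow> 0) (at_right 0)"
  proof (intro allI impI)
    fix z0 :: real assume z0: "z0 > 0"
    have "eventually (\<lambda>y. XX \<alpha> \<kappa> y z0 = xhat a b c y z0) (at_right 0)"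
      using eventually_at_right_less[of "0::real"] by eventually_elim (simp add: xhat_eq z0)
    then show "((\<lambda>y0. xhat a b c y0 z0) \<longlongrightarrow> 0) (at_right 0)"
      using XX_at_right0[OF k al, of z0] z0 tendsto_cong by fastforce
  qed
  have P6: "\<forall>y0>0. ((\<lambda>z0. xhat a b c y0 z0) \<longlongrightarrow> 0) at_top"
  proof (intro allI impI)
    fix y0 :: real assume y0: "y0 > 0"
    have "eventually (\<lambda>z. XX \<alpha> \<kappa> y0 z = xhat a b c y0 z) at_top"
      using eventually_gt_at_top[of 0] by eventually_elim (simp add: xhat_eq y0)
    then show "((\<lambda>z0. xhat a b c y0 z0) \<longlongrightarrow> 0) at_top"
      using XX_z_top[OF k al y0] tendsto_cong by fastforce
  qed
  define xc where "xc = (\<lambda>y. XX \<alpha> \<kappa> y 0)"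
  have P7: "(\<forall>y0>0. xc y0 > 0)
      \<and> (\<forall>y0>0. ((\<lambda>z0. xhat a b c y0 z0) \<longlongrightarrow> xc y0) (at_right 0))
      \<and> strict_mono_on {0<..} xc
      \<and> (xc \<longlongrightarrow> 0) (at_right 0)
      \<and> filterlim xc at_top at_top
      \<and> real_analytic_on xc {0<..}"
  proof (intro conjI allI impI)
    fix y0 :: real assume y0: "y0 > 0"
    show "xc y0 > 0" using XX_props[OF k al order_refl y0] by (simp add: xc_def)
  next
    fix y0 :: real assume y0: "y0 > 0"
    have "eventually (\<lambda>z. XX \<alpha> \<kappa> y0 z = xhat a b c y0 z) (at_right 0)"
      using eventually_at_right_less[of "0::real"] by eventually_elim (simp add: xhat_eq y0)
    then show "((\<lambda>z0. xhat a b c y0 z0) \<longlongrightarrow> xc y0) (at_right 0)"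
      using XX_z_right0[OF k al y0] tendsto_cong unfolding xc_def by fastforce
  next
    show "strict_mono_on {0<..} xc"
      by (intro strict_mono_onI) (auto simp: xc_def intro!: XX_mono_y[OF k al])
  next
    show "(xc \<longlongrightarrow> 0) (at_right 0)" unfolding xc_def by (rule XX_at_right0[OF k al order_refl])
  next
    show "filterlim xc at_top at_top" unfolding xc_def by (rule XX_at_top[OF k al order_refl])
  next
    show "real_analytic_on xc {0<..}"
      unfolding real_analytic_on_def
    proof
      fix y0 :: real assume "y0 \<in> {0<..}"
      then have y0: "y0 > 0" by simp
      obtain r coef where r: "r > 0" and
        H: "\<And>h kk. \<bar>h\<bar> < r \<and> \<bar>kk\<bar> < r \<and> 0 + kk \<ge> 0 \<Longrightarrow>
           ((\<lambda>(m,n). coef m n * h^m * kk^n) has_sum XX \<alpha> \<kappa> (y0 + h) (0 + kk)) UNIV"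
        using analytic_at[OF k al y0 order_refl] by blast
      show "\<exists>r>0. \<exists>coef :: nat \<Rightarrow> real. \<forall>h. \<bar>h\<bar> < r \<longrightarrow> ((\<lambda>n. coef n * h ^ n) has_sum xc (y0 + h)) UNIV"
      proof (intro exI[of _ r] conjI r exI[of _ "\<lambda>m. coef m 0"] allI impI)
        fix h :: real assume h: "\<bar>h\<bar> < r"
        show "((\<lambda>n. coef n 0 * h ^ n) has_sum xc (y0 + h)) UNIV"
          using has_sum_k0[OF H[of h 0]] h r by (simp add: xc_def)
      qed
    qed
  qed
  have P8: "real_analytic2_on (\<lambda>y0 z0. xhat a b c y0 z0) ({0<..} \<times> {0<..})"
    unfolding real_analytic2_on_def
  proof (intro ballI, clarify)
    fix y0 z0 :: real assume y0: "y0 > 0" and z0: "z0 > 0"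
    obtain r coef where r: "r > 0" and
      H: "\<And>h kk. \<bar>h\<bar> < r \<and> \<bar>kk\<bar> < r \<and> z0 + kk \<ge> 0 \<Longrightarrow>
           ((\<lambda>(m,n). coef m n * h^m * kk^n) has_sum XX \<alpha> \<kappa> (y0 + h) (z0 + kk)) UNIV"
      using analytic_at[OF k al y0] z0 by (meson less_imp_le)
    define R where "R = min r (min y0 z0)"
    show "\<exists>r>0. \<exists>coef. \<forall>h k. \<bar>h\<bar> < r \<and> \<bar>k\<bar> < r \<longrightarrow>
            ((\<lambda>(m, n). coef m n * h ^ m * k ^ n) has_sum xhat a b c (y0 + h) (z0 + k)) UNIV"
    proof (intro exI[of _ R] conjI exI[of _ coef] allI impI)
      show "R > 0" using r y0 z0 by (simp add: R_def)
      fix h kk :: real assume hk: "\<bar>h\<bar> < R \<and> \<bar>kk\<bar> < R"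
      have p: "y0 + h > 0" "z0 + kk > 0" using hk by (auto simp: R_def)
      show "((\<lambda>(m, n). coef m n * h ^ m * kk ^ n) has_sum xhat a b c (y0 + h) (z0 + kk)) UNIV"
        using H[of h kk] hk p by (simp add: xhat_eq R_def)
    qed
  qed
  show ?thesis using P1 P2 P3 P4 P5 P6 P7 P8 by blast
qed

end
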